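(* Let $n\ge 6$ be divisible by $6$. The map $\varphi_{1,n}:\mathcal{P}_{1,n}\to W_n$ is a bijection, and for all $(x,k),(y,l)\in\mathcal{P}_{1,n}$, $$\rho_n((x,k),(y,l))\le 2+2\,d_\infty(\varphi_{1,n}(x,k),\varphi_{1,n}(y,l))$$ and $$d_\infty(\varphi_{1,n}(x,k),\varphi_{1,n}(y,l))\le 6\,\rho_n((x,k),(y,l))+12 .$$ Consequently, for all such pairs, $\tfrac14\rho_n\le d_\infty\circ(\varphi_{1,n}\times\varphi_{1,n})\le 18\,\rho_n$.
   Context: $\mathcal{G}_n=\mathbb{Z}_2\wr\mathbb{Z}_n$ is the set of pairs $(x,k)$ with $x\subseteq\mathbb{Z}_n$, $k\in\mathbb{Z}_n$; $\rho_n$ is the shortest-path metric of the graph on $\mathcal{G}_n$ in which $(x,k)$ is adjacent to $(x,k+1)$ and to $(x\triangle\{k+1\},k+1)$ (edges undirected; this is the Cayley graph with generators $t=(\emptyset,1)$, $ta=(\{1\},1)$). Identify $\mathbb{Z}_n$ with $\{0,1,\dots,n-1\}$. Let $P_1=\{n/6,n/6+1,\dots,5n/6\}\subseteq\mathbb{Z}_n$ and $\mathcal{P}_{1,n}=\{(x,k)\in\mathcal{G}_n: k\in P_1\}$ with the metric $\rho_n$ restricted. $T_n$ is the binary tree of depth $n$: its vertices are the $0/1$ sequences of length $\le n$ (including the empty one), with $A$ adjacent to $A$ extended by one symbol, and $d_T$ its graph metric; $|A|$ is the length of $A$. On $T_n\times T_n$ let $d_\infty((A_1,A_2),(B_1,B_2))=\max\{d_T(A_1,B_1),d_T(A_2,B_2)\}$,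 and $W_n=\{(A_1,A_2)\in T_n\times T_n: |A_1|+|A_2|=n,\ |A_1|,|A_2|\in[n/6,5n/6]\}$. Define $\varphi_{1,n}(x,k)=(A_1,A_2)$ where $A_1=(a_{1,0},\dots,a_{1,k-1})$ has length $k$ with $a_{1,j}=1$ iff $j\in x$, and $A_2=(a_{2,1},\dots,a_{2,n-k})$ has length $n-k$ with $a_{2,i}=1$ iff $n-i\in x$. *)

theory Defs
  imports Complex_Main
begin

inductive walk :: "('a \<Rightarrow> 'a \<Rightarrow> bool) \<Rightarrow> nat \<Rightarrow> 'a \<Rightarrow> 'a \<Rightarrow> bool"
  for E where
  walk_refl: "walk E 0 u u"
| walk_step: "E u w \<Longrightarrow> walk E m w v \<Longrightarrow> walk E (Suc m) u v"

definition graph_dist :: "('a \<Rightarrow> 'a \<Rightarrow> bool) \<Rightarrow> 'a \<Rightarrow> 'a \<Rightarrow> nat" where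
  "graph_dist E u v = (LEAST m. walk E m u v)"

(* Z_2 wr Z_n : pairs (x,k), x \<subseteq> {0..n-1}, k \<in> {0..n-1} *)
definition lamp_group :: "nat \<Rightarrow> (nat set \<times> nat) set" where
  "lamp_group n = {(x, k). x \<subseteq> {..<n} \<and> k < n}"

definition lamp_step :: "nat \<Rightarrow> (nat set \<times> nat) \<Rightarrow> (nat set \<times> nat) \<Rightarrow> bool" where
  "lamp_step n g h \<longleftrightarrow> (case g of (x, k) \<Rightarrow>
      h = (x, (k + 1) mod n) \<or> h = (x - {(k + 1) mod n} \<union> ({(k + 1) mod n} - x), (k + 1) mod n))"

(* undirected Cayley graph edges with generators t and ta *)
definition lamp_edge :: "nat \<Rightarrow> (nat set \<times> nat) \<Rightarrow> (nat set \<times> nat) \<Rightarrow> bool" where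
  "lamp_edge n g h \<longleftrightarrow> g \<in> lamp_group n \<and> h \<in> lamp_group n \<and> (lamp_step n g h \<or> lamp_step n h g)"

definition rho :: "nat \<Rightarrow> (nat set \<times> nat) \<Rightarrow> (nat set \<times> nat) \<Rightarrow> nat" where
  "rho n = graph_dist (lamp_edge n)"

definition P1 :: "nat \<Rightarrow> (nat set \<times> nat) set" where
  "P1 n = {(x, k) \<in> lamp_group n. n div 6 \<le> k \<and> k \<le> 5 * n div 6}"

(* binary tree of depth n: 0/1 sequences (as bool lists) of length \<le> n *)
definition tree_edge :: "nat \<Rightarrow> bool list \<Rightarrow> bool list \<Rightarrow> bool" where
  "tree_edge n A B \<longleftrightarrow> length A \<le> n \<and> length B \<le> n \<and>
     ((\<exists>b. B = A @ [b]) \<or> (\<exists>b. A = B @ [b]))"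

definition dT :: "nat \<Rightarrow> bool list \<Rightarrow> bool list \<Rightarrow> nat" where
  "dT n = graph_dist (tree_edge n)"

definition d_inf :: "nat \<Rightarrow> (bool list \<times> bool list) \<Rightarrow> (bool list \<times> bool list) \<Rightarrow> nat" where
  "d_inf n P Q = max (dT n (fst P) (fst Q)) (dT n (snd P) (snd Q))"

definition W :: "nat \<Rightarrow> (bool list \<times> bool list) set" where
  "W n = {(A1, A2). length A1 + length A2 = n \<and>
      n div 6 \<le> length A1 \<and> length A1 \<le> 5 * n div 6 \<and>
      n div 6 \<le> length A2 \<and> length A2 \<le> 5 * n div 6}"

definition phi1 :: "nat \<Rightarrow> (nat set \<times> nat) \<Rightarrow> (bool list \<times> bool list)" where
  "phi1 n g = (case g of (x, k) \<Rightarrow>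
      (map (\<lambda>j. j \<in> x) [0..<k], map (\<lambda>i. n - i \<in> x) [1..<n - k + 1]))"

end

theory Submission
  imports Defs
begin

lemma walk_snoc: "walk E m u v \<Longrightarrow> E v w \<Longrightarrow> walk E (Suc m) u w"
  by (induction rule: walk.induct) (auto intro: walk.intros)

lemma walk_trans: "walk E a u v \<Longrightarrow> walk E b v w \<Longrightarrow> walk E (a + b) u w"
  by (induction rule: walk.induct) (auto intro: walk.intros)

lemma walk_sym: assumes "\<And>x y. E x y \<Longrightarrow> E y x" shows "walk E m u v \<Longrightarrow> walk E m v u"
  by (induction rule: walk.induct) (auto intro: walk.intros walk_snoc assms)

lemma walk_one: "E u v \<Longrightarrow> walk E 1 u v"
  using walk_step[OF _ walk_refl] by simp

lemma gd_le: "walk E m u v \<Longrightarrow> graph_dist E u v \<le> m"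
  unfolding graph_dist_def by (rule Least_le)

lemma gd_walk: "walk E m u v \<Longrightarrow> walk E (graph_dist E u v) u v"
  unfolding graph_dist_def by (rule LeastI)

lemma gd_refl: "graph_dist E u u = 0"
  using gd_le[OF walk_refl, of E u] by simp

lemma gd_tri: "walk E a u v \<Longrightarrow> walk E b v w \<Longrightarrow> graph_dist E u w \<le> graph_dist E u v + graph_dist E v w"
  by (rule gd_le[OF walk_trans[OF gd_walk gd_walk]])

lemma gd_sym: assumes "\<And>x y. E x y \<Longrightarrow> E y x" "walk E m u v"
  shows "graph_dist E u v = graph_dist E v u"
proof -
  have s: "walk E m' b a" if "walk E m' a b" for m' a b using walk_sym[OF assms(1) that] .
  have w1: "walk E (graph_dist E u v) u v" by (rule gd_walk[OF assms(2)])
  have w2: "walk E (graph_dist E v u) v u" by (rule gd_walk[OF s[OF assms(2)]])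
  have "graph_dist E v u \<le> graph_dist E u v" by (rule gd_le[OF s[OF w1]])
  moreover have "graph_dist E u v \<le> graph_dist E v u" by (rule gd_le[OF s[OF w2]])
  ultimately show ?thesis by simp
qed

lemma walk0: "walk E 0 u v \<Longrightarrow> u = v"
  by (erule walk.cases) auto

fun lcp :: "bool list \<Rightarrow> bool list \<Rightarrow> nat" where
  "lcp (a # A) (b # B) = (if a = b then Suc (lcp A B) else 0)"
| "lcp _ _ = 0"

lemma lcp_le1: "lcp A B \<le> length A"
  by (induction A B rule: lcp.induct) auto
lemma lcp_le2: "lcp A B \<le> length B"
  by (induction A B rule: lcp.induct) auto
lemma lcp_sym: "lcp A B = lcp B A"
  by (induction A B rule: lcp.induct) auto
lemma lcp_nth: "j < lcp A B \<Longrightarrow> A ! j = B ! j"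
  by (induction A B arbitrary: j rule: lcp.induct) (auto simp: nth_Cons split: nat.splits if_splits)
lemma lcp_app_ge: "lcp A B \<le> lcp (A @ C) B"
  by (induction A B rule: lcp.induct) auto
lemma lcp_snoc_le: "lcp (A @ [c]) B \<le> Suc (lcp A B)"
proof (induction A arbitrary: B)
  case Nil then show ?case by (cases B) auto
next
  case (Cons a A) then show ?case by (cases B) auto
qed
lemma lcp_self: "lcp A A = length A"
  by (induction A) auto

definition tdist :: "bool list \<Rightarrow> bool list \<Rightarrow> nat" where
  "tdist A B = length A + length B - 2 * lcp A B"

lemma tdist_snoc: "tdist A B \<le> Suc (tdist (A @ [c]) B)" "tdist (A @ [c]) B \<le> Suc (tdist A B)"
  using lcp_app_ge[of A B "[c]"] lcp_snoc_le[of A c B] lcp_le1[of A B] lcp_le2[of A B]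
    lcp_le1[of "A@[c]" B] lcp_le2[of "A@[c]" B]
  unfolding tdist_def by auto

lemma tdist_walk: "walk (tree_edge n) m A B \<Longrightarrow> tdist A B \<le> m"
proof (induction rule: walk.induct)
  case (walk_refl u) then show ?case by (simp add: tdist_def lcp_self)
next
  case (walk_step u w m v)
  from walk_step(1) consider b where "w = u @ [b]" | b where "u = w @ [b]"
    unfolding tree_edge_def by auto
  then show ?case
  proof cases
    case 1 then show ?thesis using tdist_snoc(1)[where A=u and B=v and c=b] walk_step(3) by simp
  next
    case 2 then show ?thesis using tdist_snoc(2)[where A=w and B=v and c=b] walk_step(3) by simp
  qed
qed

lemma tree_up: "length (A @ C) \<le> n \<Longrightarrow> walk (tree_edge n) (length C) A (A @ C)"
proof (induction C rule: rev_induct)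
  case Nil then show ?case by (simp add: walk_refl)
next
  case (snoc c C)
  then show ?case by (auto intro!: walk_snoc simp: tree_edge_def)
qed

lemma tree_sym: "tree_edge n A B \<Longrightarrow> tree_edge n B A"
  unfolding tree_edge_def by auto

lemma tree_down: "length (A @ C) \<le> n \<Longrightarrow> walk (tree_edge n) (length C) (A @ C) A"
  by (rule walk_sym[OF tree_sym tree_up])

lemma tree_walk: "length A \<le> n \<Longrightarrow> length B \<le> n \<Longrightarrow> walk (tree_edge n) (length A + length B) A B"
  using walk_trans[OF tree_down[of "[]" A n] tree_up[of "[]" B n]] by simp

lemma dT_ge: "length A \<le> n \<Longrightarrow> length B \<le> n \<Longrightarrow> tdist A B \<le> dT n A B"
  unfolding dT_def by (rule tdist_walk[OF gd_walk[OF tree_walk]])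

lemma dT_le: "length A \<le> n \<Longrightarrow> length B \<le> n \<Longrightarrow> dT n A B \<le> length A + length B"
  unfolding dT_def by (rule gd_le[OF tree_walk])

lemma dT_tri: "length A \<le> n \<Longrightarrow> length B \<le> n \<Longrightarrow> length C \<le> n \<Longrightarrow> dT n A C \<le> dT n A B + dT n B C"
  unfolding dT_def by (rule gd_tri[OF tree_walk[of A n B] tree_walk[of B n C]])

lemma dT_sym: "length A \<le> n \<Longrightarrow> length B \<le> n \<Longrightarrow> dT n A B = dT n B A"
  unfolding dT_def using gd_sym[of "tree_edge n", OF tree_sym tree_walk[of A n B]] by simp

lemma dT_refl: "dT n A A = 0" unfolding dT_def by (rule gd_refl)


definition mix :: "nat set \<Rightarrow> nat set \<Rightarrow> nat set \<Rightarrow> nat set" where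
  "mix x y S = (x - S) \<union> (y \<inter> S)"

lemma lamp_sym: "lamp_edge n g h \<Longrightarrow> lamp_edge n h g"
  unfolding lamp_edge_def by auto

lemma edge_right:
  assumes "Suc k < n" "x \<subseteq> {..<n}" "x' \<subseteq> {..<n}" "x' - {Suc k} = x - {Suc k}"
  shows "lamp_edge n (x,k) (x',Suc k)"
proof -
  have "x' = x \<or> x' = x - {Suc k} \<union> ({Suc k} - x)"
  proof (cases "Suc k \<in> x \<longleftrightarrow> Suc k \<in> x'")
    case True then show ?thesis using assms(4) by blast
  next
    case False then show ?thesis using assms(4) by blast
  qed
  then show ?thesis using assms unfolding lamp_edge_def lamp_step_def lamp_group_def by auto
qed

lemma edge_wrap:
  assumes "0 < n" "x \<subseteq> {..<n}" "x' \<subseteq> {..<n}" "x' - {0} = x - {0}"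
  shows "lamp_edge n (x,n-1) (x',0)"
proof -
  have "x' = x \<or> x' = x - {0} \<union> ({0} - x)"
  proof (cases "0 \<in> x \<longleftrightarrow> 0 \<in> x'")
    case True then show ?thesis using assms(4) by blast
  next
    case False then show ?thesis using assms(4) by blast
  qed
  moreover have "(n - 1 + 1) mod n = 0" using assms(1) by simp
  ultimately show ?thesis using assms unfolding lamp_edge_def lamp_step_def lamp_group_def by auto
qed

lemma mix_sub: "x \<subseteq> {..<n} \<Longrightarrow> y \<subseteq> {..<n} \<Longrightarrow> mix x y S \<subseteq> {..<n}"
  unfolding mix_def by auto

lemma sweep_right:
  assumes "x \<subseteq> {..<n}" "y \<subseteq> {..<n}"
  shows "p \<le> q \<Longrightarrow> q < n \<Longrightarrow> walk (lamp_edge n) (q - p) (x,p) (mix x y {p<..q}, q)"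
proof (induction q)
  case 0 then show ?case by (simp add: mix_def walk_refl)
next
  case (Suc q)
  show ?case
  proof (cases "p = Suc q")
    case True then show ?thesis by (simp add: mix_def walk_refl)
  next
    case False
    then have pq: "p \<le> q" using Suc by simp
    have w: "walk (lamp_edge n) (q - p) (x,p) (mix x y {p<..q}, q)" using Suc pq by simp
    have e: "lamp_edge n (mix x y {p<..q}, q) (mix x y {p<..Suc q}, Suc q)"
      by (rule edge_right) (use Suc assms mix_sub in \<open>auto simp: mix_def\<close>)
    have "Suc q - p = Suc (q - p)" using pq by simp
    then show ?thesis using walk_snoc[OF w e] by simp
  qed
qed

lemma sweep_left:
  assumes "x \<subseteq> {..<n}" "y \<subseteq> {..<n}" "p \<le> q" "q < n"
  shows "walk (lamp_edge n) (q - p) (x,q) (mix x y {p<..q}, p)"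
proof -
  let ?x' = "mix x y {p<..q}"
  have w: "walk (lamp_edge n) (q - p) (?x',p) (mix ?x' x {p<..q}, q)"
    by (rule sweep_right) (use assms mix_sub in auto)
  have e: "mix ?x' x {p<..q} = x" unfolding mix_def by auto
  show ?thesis using walk_sym[OF lamp_sym w] e by simp
qed

lemma excursion:
  assumes "x \<subseteq> {..<n}" "y \<subseteq> {..<n}" "a < n" "2 \<le> n"
  shows "walk (lamp_edge n) 2 (x,a) (mix x y {a}, a)"
proof (cases a)
  case 0
  have e1: "lamp_edge n (mix x y {0}, n-1) (x, 0)"
    by (rule edge_wrap) (use assms mix_sub in \<open>auto simp: mix_def\<close>)
  have e2: "lamp_edge n (mix x y {0}, n-1) (mix x y {0}, 0)"
    by (rule edge_wrap) (use assms mix_sub in \<open>auto simp: mix_def\<close>)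
  show ?thesis using walk_step[OF lamp_sym[OF e1] walk_one[of "lamp_edge n", OF e2]] 0 by (simp add: numeral_2_eq_2)
next
  case (Suc b)
  have e1: "lamp_edge n (mix x y {a}, b) (x, a)"
    by (rule edge_right[of b n _ x, folded Suc]) (use assms mix_sub Suc in \<open>auto simp: mix_def\<close>)
  have e2: "lamp_edge n (mix x y {a}, b) (mix x y {a}, a)"
    by (rule edge_right[of b n, folded Suc]) (use assms mix_sub Suc in \<open>auto simp: mix_def\<close>)
  show ?thesis using walk_step[OF lamp_sym[OF e1] walk_one[of "lamp_edge n", OF e2]] by (simp add: numeral_2_eq_2)
qed


lemma phi_len: "k < n \<Longrightarrow> length (fst (phi1 n (x,k))) \<le> n \<and> length (snd (phi1 n (x,k))) \<le> n"
  unfolding phi1_def by (simp, arith)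

lemma phi_snd_nth: "t < n - k \<Longrightarrow> snd (phi1 n (x,k)) ! t = (n - Suc t \<in> x)"
  unfolding phi1_def by (simp del: upt_Suc)

lemma phi_fst_nth: "j < k \<Longrightarrow> fst (phi1 n (x,k)) ! j = (j \<in> x)"
  unfolding phi1_def by simp

lemma d_inf_tri:
  assumes "snd u < n" "snd v < n" "snd z < n"
  shows "d_inf n (phi1 n u) (phi1 n v) \<le> d_inf n (phi1 n u) (phi1 n z) + d_inf n (phi1 n z) (phi1 n v)"
proof -
  obtain x k y l x' k' where "u = (x,k)" "v = (y,l)" "z = (x',k')" by (cases u, cases v, cases z) auto
  then show ?thesis using assms phi_len[of k n x] phi_len[of l n y] phi_len[of k' n x']
      dT_tri[of "fst (phi1 n u)" n "fst (phi1 n z)" "fst (phi1 n v)"]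
      dT_tri[of "snd (phi1 n u)" n "snd (phi1 n z)" "snd (phi1 n v)"]
    unfolding d_inf_def by auto
qed

lemma d_inf_sym:
  assumes "snd u < n" "snd v < n"
  shows "d_inf n (phi1 n u) (phi1 n v) = d_inf n (phi1 n v) (phi1 n u)"
proof -
  obtain x k y l where "u = (x,k)" "v = (y,l)" by (cases u, cases v) auto
  then show ?thesis using assms phi_len[of k n x] phi_len[of l n y]
      dT_sym[of "fst (phi1 n u)" n "fst (phi1 n v)"]
      dT_sym[of "snd (phi1 n u)" n "snd (phi1 n v)"]
    unfolding d_inf_def by auto
qed

lemma d_inf_refl: "d_inf n P P = 0"
  unfolding d_inf_def by (simp add: dT_refl)

lemma phi_step:
  assumes "Suc k < n" "x' - {Suc k} = x - {Suc k}"
  shows "d_inf n (phi1 n (x,k)) (phi1 n (x', Suc k)) \<le> 3"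
proof -
  have A1: "map (\<lambda>j. j \<in> x') [0..<Suc k] = map (\<lambda>j. j \<in> x) [0..<k] @ [k \<in> x]"
  proof -
    have "\<And>j. j < Suc k \<Longrightarrow> (j \<in> x') = (j \<in> x)" using assms(2) by blast
    then show ?thesis by simp
  qed
  define r where "r = n - k - 2"
  have nk: "n - k = Suc (Suc r)" using assms(1) r_def by simp
  define f where "f = (\<lambda>i. n - i \<in> x)"
  define f' where "f' = (\<lambda>i. n - i \<in> x')"
  have upt1: "[1..<n - k + 1] = [1..<Suc r] @ [Suc r, Suc (Suc r)]" using nk by simp
  have "n - Suc k + 1 = Suc (Suc r)" using nk by simp
  then have upt2: "[1..<n - Suc k + 1] = [1..<Suc r] @ [Suc r]" by (simp only: upt_Suc_append[of 1 "Suc r"])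
  have Peq: "map f [1..<Suc r] = map f' [1..<Suc r]"
  proof (rule map_cong[OF refl])
    fix i assume "i \<in> set [1..<Suc r]"
    then have "i \<le> r" by auto
    then have "n - i \<noteq> Suc k" using nk by linarith
    then show "f i = f' i" unfolding f_def f'_def using assms(2) by blast
  qed
  define P where "P = map f [1..<Suc r]"
  have lenP: "length P = r" unfolding P_def by (simp del: upt_Suc)
  have "snd (phi1 n (x,k)) = map f [1..<n - k + 1]"
    unfolding phi1_def f_def by (simp del: upt_Suc)
  also have "\<dots> = P @ [f (Suc r), f (Suc (Suc r))]" unfolding upt1 P_def by simp
  finally have A2: "snd (phi1 n (x,k)) = P @ [f (Suc r), f (Suc (Suc r))]" .
  have "snd (phi1 n (x', Suc k)) = map f' [1..<n - Suc k + 1]"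
    unfolding phi1_def f'_def by (simp del: upt_Suc)
  also have "\<dots> = P @ [f' (Suc r)]" unfolding upt2 P_def Peq by simp
  finally have A2': "snd (phi1 n (x', Suc k)) = P @ [f' (Suc r)]" .
  have lP: "length P + 2 \<le> n" using nk lenP by simp
  have w1: "walk (tree_edge n) 2 (P @ [f (Suc r), f (Suc (Suc r))]) P"
    using tree_down[of P "[f (Suc r), f (Suc (Suc r))]" n] lP by (simp add: numeral_2_eq_2)
  have w2: "walk (tree_edge n) 1 P (P @ [f' (Suc r)])"
    using tree_up[of P "[f' (Suc r)]" n] lP by simp
  have d2: "dT n (snd (phi1 n (x,k))) (snd (phi1 n (x', Suc k))) \<le> 3"
    unfolding A2 A2' dT_def using gd_le[OF walk_trans[OF w1 w2]] by simp
  have w3: "walk (tree_edge n) 1 (map (\<lambda>j. j \<in> x) [0..<k]) (map (\<lambda>j. j \<in> x) [0..<k] @ [k \<in> x])"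
    using tree_up[of "map (\<lambda>j. j \<in> x) [0..<k]" "[k \<in> x]" n] assms(1) by simp
  have d1: "dT n (fst (phi1 n (x,k))) (fst (phi1 n (x', Suc k))) \<le> 3"
  proof -
    have e1: "fst (phi1 n (x', Suc k)) = map (\<lambda>j. j \<in> x) [0..<k] @ [k \<in> x]"
      unfolding phi1_def prod.case fst_conv by (rule A1)
    have e2: "fst (phi1 n (x, k)) = map (\<lambda>j. j \<in> x) [0..<k]"
      unfolding phi1_def prod.case fst_conv by (rule refl)
    show ?thesis unfolding e1 e2 dT_def using gd_le[OF w3] by simp
  qed
  show ?thesis using d1 d2 unfolding d_inf_def by simp
qed

definition wd :: "nat \<Rightarrow> nat \<Rightarrow> nat" where "wd n k = min k (n - 1 - k)"

lemma wd_step: assumes "k < n" shows "wd n ((k+1) mod n) \<le> wd n k + 1 \<and> wd n k \<le> wd n ((k+1) mod n) + 1"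
proof (cases "k + 1 < n")
  case True then show ?thesis by (auto simp: wd_def)
next
  case False
  then have "k + 1 = n" using assms by simp
  then have "k = n - 1" "(k+1) mod n = 0" by auto
  then show ?thesis by (simp add: wd_def)
qed

lemma edge_prop:
  assumes "lamp_edge n u z"
  shows "(d_inf n (phi1 n u) (phi1 n z) \<le> 3 \<or> (wd n (snd u) = 0 \<and> wd n (snd z) = 0))
     \<and> wd n (snd u) \<le> wd n (snd z) + 1 \<and> wd n (snd z) \<le> wd n (snd u) + 1"
proof -
  obtain x k x' k' where u: "u = (x,k)" and z: "z = (x',k')" by (cases u, cases z) auto
  have kn: "k < n" "k' < n" using assms u z unfolding lamp_edge_def lamp_group_def by auto
  have gen: "(d_inf n (phi1 n (a,i)) (phi1 n (b,j)) \<le> 3 \<or> (wd n i = 0 \<and> wd n j = 0))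
     \<and> wd n i \<le> wd n j + 1 \<and> wd n j \<le> wd n i + 1"
    if st: "lamp_step n (a,i) (b,j)" and "i < n" for a b i j
  proof -
    have j: "j = (i+1) mod n" and ab: "b - {j} = a - {j}" using st unfolding lamp_step_def by auto
    show ?thesis
    proof (cases "i + 1 < n")
      case True
      then have "j = Suc i" using j by simp
      then show ?thesis using phi_step[of i n b a] True ab wd_step[of i n] \<open>i < n\<close> j by auto
    next
      case False
      then have "Suc i = n" using \<open>i < n\<close> by simp
      then have "i = n - 1" "j = 0" using j by auto
      then show ?thesis by (simp add: wd_def)
    qed
  qed
  from assms consider "lamp_step n u z" | "lamp_step n z u" unfolding lamp_edge_def by auto
  then show ?thesis
  proof cases
    case 1 then show ?thesis using gen[of x k x' k'] u z kn by simp
  next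
    case 2 then show ?thesis using gen[of x' k' x k] u z kn d_inf_sym[of u n z] by auto
  qed
qed

lemma edge_group: "lamp_edge n u z \<Longrightarrow> snd u < n \<and> snd z < n"
  unfolding lamp_edge_def lamp_group_def by auto

lemma lampA: "walk (lamp_edge n) m u v \<Longrightarrow> wd n (snd v) \<le> wd n (snd u) + m"
proof (induction rule: walk.induct)
  case (walk_refl u) then show ?case by simp
next
  case (walk_step u w m v) then show ?case using edge_prop[OF walk_step(1)] by simp
qed

lemma lampB: "walk (lamp_edge n) m u v \<Longrightarrow> snd u < n \<Longrightarrow> snd v < n \<Longrightarrow>
   d_inf n (phi1 n u) (phi1 n v) \<le> 3 * m \<or> wd n (snd u) + wd n (snd v) \<le> m"
proof (induction rule: walk.induct)
  case (walk_refl u) then show ?case by (simp add: d_inf_refl)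
next
  case (walk_step u z m v)
  have zn: "snd z < n" using edge_group[OF walk_step(1)] by simp
  note ep = edge_prop[OF walk_step(1)]
  note IH = walk_step(3)[OF zn walk_step(5)]
  note tri = d_inf_tri[of u n v z, OF walk_step(4,5) zn]
  show ?case
  proof (cases "d_inf n (phi1 n u) (phi1 n z) \<le> 3")
    case True
    then show ?thesis using IH tri ep by auto
  next
    case False
    then have "wd n (snd u) = 0" "wd n (snd z) = 0" using ep by auto
    then show ?thesis using lampA[OF walk_step(2)] by simp
  qed
qed


lemma tdist0: assumes "tdist A B = 0" shows "A = B"
proof -
  have "lcp A B = length A" "lcp A B = length B"
    using assms lcp_le1[of A B] lcp_le2[of A B] unfolding tdist_def by auto
  then show ?thesis
  proof (intro nth_equalityI)
    fix i assume "i < length A"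
    then show "A ! i = B ! i" using lcp_nth[of i A B] \<open>lcp A B = length A\<close> by simp
  qed simp
qed

lemma upper:
  assumes xs: "x \<subseteq> {..<n}" and ys: "y \<subseteq> {..<n}" and kn: "k < n" and ln: "l < n" and n2: "2 \<le> n"
  shows "\<exists>m. walk (lamp_edge n) m (x,k) (y,l) \<and> m \<le> 2 + 2 * d_inf n (phi1 n (x,k)) (phi1 n (y,l))"
proof -
  define A1 where "A1 = fst (phi1 n (x,k))"
  define B1 where "B1 = fst (phi1 n (y,l))"
  define A2 where "A2 = snd (phi1 n (x,k))"
  define B2 where "B2 = snd (phi1 n (y,l))"
  define D where "D = d_inf n (phi1 n (x,k)) (phi1 n (y,l))"
  define a where "a = lcp A1 B1"
  define c where "c = lcp A2 B2"
  define b where "b = n - c"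
  have lA1: "length A1 = k" and lB1: "length B1 = l" and lA2: "length A2 = n - k" and lB2: "length B2 = n - l"
    unfolding A1_def B1_def A2_def B2_def phi1_def by auto
  have ak: "a \<le> k" "a \<le> l" using lcp_le1[of A1 B1] lcp_le2[of A1 B1] lA1 lB1 a_def by auto
  have ck: "c \<le> n - k" "c \<le> n - l" using lcp_le1[of A2 B2] lcp_le2[of A2 B2] lA2 lB2 c_def by auto
  have bc: "b + c = n" "k \<le> b" "l \<le> b" using ck kn ln b_def by auto
  have low: "j \<in> x \<longleftrightarrow> j \<in> y" if "j < a" for j
  proof -
    have "A1 ! j = B1 ! j" using lcp_nth[of j A1 B1] that a_def by simp
    moreover have "j < k" "j < l" using that ak by auto
    ultimately show ?thesis unfolding A1_def B1_def phi1_def by simp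
  qed
  have high: "j \<in> x \<longleftrightarrow> j \<in> y" if "b \<le> j" "j < n" for j
  proof -
    define t where "t = n - j - 1"
    have t: "t < c" using that bc t_def by linarith
    have "A2 ! t = B2 ! t" using lcp_nth[of t A2 B2] t c_def by simp
    moreover have "t < n - k" "t < n - l" using t ck by auto
    moreover have "n - Suc t = j" using that t_def by auto
    ultimately show ?thesis unfolding A2_def B2_def using phi_snd_nth[of t n k x] phi_snd_nth[of t n l y] by simp
  qed
  have d1: "k + l \<le> D + 2 * a"
    using dT_ge[of A1 n B1] lA1 lB1 kn ln unfolding D_def d_inf_def A1_def B1_def a_def tdist_def
    by (simp add: A1_def B1_def)
  have d2: "(n - k) + (n - l) \<le> D + 2 * c"
    using dT_ge[of A2 n B2] lA2 lB2 unfolding D_def d_inf_def A2_def B2_def c_def tdist_def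
    by (simp add: A2_def B2_def)
  define M where "M = max (max k l) (b - 1)"
  have M: "M < n" "M \<le> b" "k \<le> M" "l \<le> M" "b \<le> Suc M" using kn ln bc unfolding M_def by auto
  have an: "a < n" using ak kn by simp
  have final: "mix (mix (mix x y S1) y S2) y S3 = y"
    if "{a..M} \<subseteq> S1 \<union> S2 \<union> S3" for S1 S2 S3
  proof (rule set_eqI)
    fix j
    show "j \<in> mix (mix (mix x y S1) y S2) y S3 \<longleftrightarrow> j \<in> y"
    proof (cases "a \<le> j \<and> j \<le> M")
      case True then show ?thesis using that unfolding mix_def by auto
    next
      case False
      then have "j \<in> x \<longleftrightarrow> j \<in> y"
      proof (cases "j < a")
        case True then show ?thesis using low by simp
      next
        case False
        then have "b \<le> j" using \<open>\<not> (a \<le> j \<and> j \<le> M)\<close> M by auto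
        then show ?thesis using high xs ys by (cases "j < n") auto
      qed
      then show ?thesis unfolding mix_def by auto
    qed
  qed
  have mixyy: "mix y y S = y" for S unfolding mix_def by auto
  note subs = mix_sub[OF xs ys] 
  show ?thesis
  proof (cases "k \<le> l")
    case True
    define x1 where "x1 = mix x y {a<..k}"
    define x2 where "x2 = mix x1 y {a}"
    define x3 where "x3 = mix x2 y {a<..M}"
    have w1: "walk (lamp_edge n) (k - a) (x,k) (x1,a)"
      unfolding x1_def by (rule sweep_left) (use xs ys ak kn in auto)
    have x1s: "x1 \<subseteq> {..<n}" unfolding x1_def using subs by auto
    have w2: "walk (lamp_edge n) 2 (x1,a) (x2,a)"
      unfolding x2_def by (rule excursion) (use x1s ys an n2 in auto)
    have x2s: "x2 \<subseteq> {..<n}" unfolding x2_def using mix_sub[OF x1s ys] by auto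
    have w3: "walk (lamp_edge n) (M - a) (x2,a) (x3,M)"
      unfolding x3_def by (rule sweep_right) (use x2s ys ak M in auto)
    have x3y: "x3 = y" unfolding x3_def x2_def x1_def by (rule final) auto
    have w4: "walk (lamp_edge n) (M - l) (x3,M) (mix x3 y {l<..M},l)"
      by (rule sweep_left) (use x3y ys M in auto)
    have w: "walk (lamp_edge n) ((k - a) + 2 + (M - a) + (M - l)) (x,k) (y,l)"
      using walk_trans[OF walk_trans[OF walk_trans[OF w1 w2] w3] w4] x3y mixyy by simp
    moreover have "(k - a) + 2 + (M - a) + (M - l) \<le> 2 + 2 * D"
      using d1 d2 bc M ak True by linarith
    ultimately show ?thesis unfolding D_def by blast
  next
    case False
    define x1 where "x1 = mix x y {k<..M}"
    define x2 where "x2 = mix x1 y {a<..M}"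
    define x3 where "x3 = mix x2 y {a}"
    have w1: "walk (lamp_edge n) (M - k) (x,k) (x1,M)"
      unfolding x1_def by (rule sweep_right) (use xs ys M in auto)
    have x1s: "x1 \<subseteq> {..<n}" unfolding x1_def using subs by auto
    have w2: "walk (lamp_edge n) (M - a) (x1,M) (x2,a)"
      unfolding x2_def by (rule sweep_left) (use x1s ys ak M in auto)
    have x2s: "x2 \<subseteq> {..<n}" unfolding x2_def using mix_sub[OF x1s ys] by auto
    have w3: "walk (lamp_edge n) 2 (x2,a) (x3,a)"
      unfolding x3_def by (rule excursion) (use x2s ys an n2 in auto)
    have x3y: "x3 = y" unfolding x3_def x2_def x1_def by (rule final) auto
    have w4: "walk (lamp_edge n) (l - a) (x3,a) (mix x3 y {a<..l},l)"
      by (rule sweep_right) (use x3y ys ak ln in auto)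
    have w: "walk (lamp_edge n) ((M - k) + (M - a) + 2 + (l - a)) (x,k) (y,l)"
      using walk_trans[OF walk_trans[OF walk_trans[OF w1 w2] w3] w4] x3y mixyy by simp
    moreover have "(M - k) + (M - a) + 2 + (l - a) \<le> 2 + 2 * D"
      using d1 d2 bc M ak False by linarith
    ultimately show ?thesis unfolding D_def by blast
  qed
qed


lemma phi_inj:
  assumes "x \<subseteq> {..<n}" "y \<subseteq> {..<n}" "k < n" "phi1 n (x,k) = phi1 n (y,l)"
  shows "(x,k) = (y,l)"
proof -
  have kl: "k = l" using arg_cong[OF assms(4), of "\<lambda>p. length (fst p)"] unfolding phi1_def by simp
  have "j \<in> x \<longleftrightarrow> j \<in> y" if "j < n" for j
  proof (cases "j < k")
    case True
    have "fst (phi1 n (x,k)) ! j = fst (phi1 n (y,l)) ! j" using assms(4) by simp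
    then show ?thesis using True kl unfolding phi1_def by simp
  next
    case False
    define t where "t = n - j - 1"
    have "snd (phi1 n (x,k)) ! t = snd (phi1 n (y,l)) ! t" using assms(4) by simp
    moreover have "t < n - k" "n - Suc t = j" using False that t_def by auto
    ultimately show ?thesis using kl phi_snd_nth[of t n k x] phi_snd_nth[of t n l y] by simp
  qed
  then have "x = y" using assms(1,2) by blast
  then show ?thesis using kl by simp
qed

lemma bij_part:
  assumes "6 dvd n" "6 \<le> n"
  shows "bij_betw (phi1 n) (P1 n) (W n)"
proof -
  obtain t where nt: "n = 6 * t" using assms by blast
  have t1: "1 \<le> t" using nt assms(2) by simp
  have inj: "inj_on (phi1 n) (P1 n)"
  proof (rule inj_onI)
    fix g h assume g: "g \<in> P1 n" and h: "h \<in> P1 n" and e: "phi1 n g = phi1 n h"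
    obtain x k where gx: "g = (x,k)" by (cases g) auto
    obtain y l where hy: "h = (y,l)" by (cases h) auto
    have "x \<subseteq> {..<n}" "k < n" using g gx unfolding P1_def lamp_group_def by auto
    moreover have "y \<subseteq> {..<n}" using h hy unfolding P1_def lamp_group_def by auto
    ultimately show "g = h" using phi_inj[of x n y k l] e gx hy by simp
  qed
  have sub: "phi1 n ` P1 n \<subseteq> W n"
    unfolding P1_def W_def lamp_group_def phi1_def using nt by auto
  have sup: "W n \<subseteq> phi1 n ` P1 n"
  proof
    fix p assume "p \<in> W n"
    then obtain A1 A2 where p: "p = (A1,A2)" and len: "length A1 + length A2 = n"
      "t \<le> length A1" "length A1 \<le> 5 * t"
      unfolding W_def using nt by auto
    define k where "k = length A1"
    define x where "x = {j. j < k \<and> A1 ! j} \<union> {j. k \<le> j \<and> j < n \<and> A2 ! (n - j - 1)}"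
    have kn: "k < n" using len nt k_def t1 by simp
    have xs: "x \<subseteq> {..<n}" unfolding x_def using kn by auto
    have f: "map (\<lambda>j. j \<in> x) [0..<k] = A1"
      by (rule nth_equalityI) (auto simp: x_def k_def)
    have s: "map (\<lambda>i. n - i \<in> x) [1..<n - k + 1] = A2"
    proof (rule nth_equalityI)
      show "length (map (\<lambda>i. n - i \<in> x) [1..<n - k + 1]) = length A2" using len k_def by (simp del: upt_Suc)
    next
      fix i assume "i < length (map (\<lambda>i. n - i \<in> x) [1..<n - k + 1])"
      then have i: "i < n - k" by (simp del: upt_Suc)
      then have "n - (1 + i) \<ge> k" "n - (1 + i) < n" "n - (n - (1 + i)) - 1 = i" by auto
      then show "map (\<lambda>i. n - i \<in> x) [1..<n - k + 1] ! i = A2 ! i"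
        using i by (simp del: upt_Suc add: nth_map x_def)
    qed
    have "phi1 n (x,k) = p" unfolding phi1_def p using f s by simp
    moreover have "(x,k) \<in> P1 n" unfolding P1_def lamp_group_def using xs kn len nt k_def by auto
    ultimately show "p \<in> phi1 n ` P1 n" by blast
  qed
  show ?thesis unfolding bij_betw_def using inj sub sup by blast
qed

theorem mainTheorem3:
  fixes n :: nat
  assumes "n \<ge> 6" and "6 dvd n"
  shows "bij_betw (phi1 n) (P1 n) (W n) \<and>
    (\<forall>g\<in>P1 n. \<forall>h\<in>P1 n.
       rho n g h \<le> 2 + 2 * d_inf n (phi1 n g) (phi1 n h) \<and>
       d_inf n (phi1 n g) (phi1 n h) \<le> 6 * rho n g h + 12 \<and>
       real (rho n g h) / 4 \<le> real (d_inf n (phi1 n g) (phi1 n h)) \<and>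
       real (d_inf n (phi1 n g) (phi1 n h)) \<le> 18 * real (rho n g h))"
proof (intro conjI ballI)
  show "bij_betw (phi1 n) (P1 n) (W n)" using bij_part assms(2,1) .
next
  fix g h assume g: "g \<in> P1 n" and h: "h \<in> P1 n"
  obtain t where nt: "n = 6 * t" using assms by blast
  obtain x k where gx: "g = (x,k)" by (cases g) auto
  obtain y l where hy: "h = (y,l)" by (cases h) auto
  have xs: "x \<subseteq> {..<n}" "k < n" "t \<le> k" "k \<le> 5 * t" using g gx nt unfolding P1_def lamp_group_def by auto
  have ys: "y \<subseteq> {..<n}" "l < n" "t \<le> l" "l \<le> 5 * t" using h hy nt unfolding P1_def lamp_group_def by auto
  let ?D = "d_inf n (phi1 n g) (phi1 n h)"
  let ?r = "rho n g h"
  obtain m where wm: "walk (lamp_edge n) m g h" and mD: "m \<le> 2 + 2 * ?D"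
    using upper[OF xs(1) ys(1) xs(2) ys(2)] assms(1) gx hy by auto
  have U: "?r \<le> 2 + 2 * ?D" using gd_le[OF wm] mD unfolding rho_def by simp
  have wr: "walk (lamp_edge n) ?r g h" unfolding rho_def using gd_walk[OF wm] .
  have Dle: "?D \<le> 2 * n"
    using dT_le[of "fst (phi1 n g)" n "fst (phi1 n h)"] dT_le[of "snd (phi1 n g)" n "snd (phi1 n h)"]
      phi_len[of k n x] phi_len[of l n y] xs ys gx hy unfolding d_inf_def by auto
  have L: "?D \<le> 6 * ?r + 12"
  proof -
    from lampB[OF wr] xs ys gx hy
    have "?D \<le> 3 * ?r \<or> wd n k + wd n l \<le> ?r" by simp
    moreover have "wd n k + 1 \<ge> t" "wd n l + 1 \<ge> t" unfolding wd_def using xs ys nt by (auto simp: min_def)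
    ultimately show ?thesis using Dle nt by linarith
  qed
  have eq: "g = h" if "?D = 0"
  proof -
    have "dT n (fst (phi1 n g)) (fst (phi1 n h)) = 0" "dT n (snd (phi1 n g)) (snd (phi1 n h)) = 0"
      using that unfolding d_inf_def by auto
    then have "tdist (fst (phi1 n g)) (fst (phi1 n h)) = 0" "tdist (snd (phi1 n g)) (snd (phi1 n h)) = 0"
      using dT_ge[of "fst (phi1 n g)" n "fst (phi1 n h)"] dT_ge[of "snd (phi1 n g)" n "snd (phi1 n h)"]
        phi_len[of k n x] phi_len[of l n y] xs ys gx hy by auto
    then have "phi1 n g = phi1 n h" using tdist0 by (metis prod.collapse)
    then show ?thesis using phi_inj[OF xs(1) ys(1) xs(2)] gx hy by simp
  qed
  have R1: "real ?r / 4 \<le> real ?D"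
  proof (cases "?D = 0")
    case True then have "g = h" using eq by simp
    then show ?thesis using True by (simp add: rho_def gd_refl)
  next
    case False then show ?thesis using U by simp
  qed
  have R2: "real ?D \<le> 18 * real ?r"
  proof (cases "?r = 0")
    case True then have "g = h" using wr walk0 by metis
    then show ?thesis by (simp add: d_inf_refl)
  next
    case False
    then have "real ?D \<le> 6 * real ?r + 12" using L by linarith
    then show ?thesis using False by linarith
  qed
  show "?r \<le> 2 + 2 * ?D" by (rule U)
  show "?D \<le> 6 * ?r + 12" by (rule L)
  show "real ?r / 4 \<le> real ?D" by (rule R1)
  show "real ?D \<le> 18 * real ?r" by (rule R2)
qed

end
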